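(* Let $(G,k)$ be an instance, let $v$ be a large-sparse vertex, and let $B\subseteq V\setminus\{v\}$ with $|B|\le 2k$ be such that $G-B$ has no cycle passing through $v$. Let $C$ be a connected component of $G-v-B$ that contains a neighbor of $v$, is a tree, and has no vertex adjacent to a vertex of $B$. Then $(G,k)$ is a yes-instance if and only if $(G-V(C),k)$ is a yes-instance.
   Context: Graphs are undirected, without self-loops, possibly with multi-edges. $N(v)$ is the set of vertices adjacent to $v$; $\rho(v)$ is the number of unordered pairs $\{u_1,u_2\}\subseteq N(v)$ joined by at least one edge. A vertex $v$ is large-sparse if $|N(v)|>7k$ and $\rho(v)\le |N(v)|(|N(v)|-1)/4$. A vertex set induces a clique if between any two distinct vertices there is exactly one edge, and a tree if it is connected and acyclic (two parallel edges form a cycle). A feasible solution is $X\subseteq V$, $|X|\le k$, with every component of $G-X$ a clique or a tree; $(G,k)$ is a yes-instance if a feasible solution exists. *)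

theory Defs
  imports Complex_Main
begin

text \<open>A finite undirected multigraph without self-loops is given by a vertex set V and a
  symmetric edge-multiplicity function m (m u w = number of edges between u and w).\<close>

definition mgraph :: "'a set \<Rightarrow> ('a \<Rightarrow> 'a \<Rightarrow> nat) \<Rightarrow> bool" where
  "mgraph V m \<longleftrightarrow> finite V \<and> (\<forall>u w. m u w = m w u) \<and> (\<forall>u. m u u = 0)
     \<and> (\<forall>u w. 0 < m u w \<longrightarrow> u \<in> V \<and> w \<in> V)"

definition restrict_edges :: "('a \<Rightarrow> 'a \<Rightarrow> nat) \<Rightarrow> 'a set \<Rightarrow> 'a \<Rightarrow> 'a \<Rightarrow> nat" where
  "restrict_edges m S = (\<lambda>u w. if u \<in> S \<and> w \<in> S then m u w else 0)"

definition nbrs :: "'a set \<Rightarrow> ('a \<Rightarrow> 'a \<Rightarrow> nat) \<Rightarrow> 'a \<Rightarrow> 'a set" where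
  "nbrs V m v = {u \<in> V. 0 < m v u}"

definition rho :: "'a set \<Rightarrow> ('a \<Rightarrow> 'a \<Rightarrow> nat) \<Rightarrow> 'a \<Rightarrow> nat" where
  "rho V m v = card {p. \<exists>u1 u2. p = {u1, u2} \<and> u1 \<in> nbrs V m v \<and> u2 \<in> nbrs V m v
                        \<and> u1 \<noteq> u2 \<and> 0 < m u1 u2}"

definition large_sparse :: "'a set \<Rightarrow> ('a \<Rightarrow> 'a \<Rightarrow> nat) \<Rightarrow> nat \<Rightarrow> 'a \<Rightarrow> bool" where
  "large_sparse V m k v \<longleftrightarrow> v \<in> V \<and> card (nbrs V m v) > 7 * k \<and>
     real (rho V m v) \<le> real (card (nbrs V m v)) * (real (card (nbrs V m v)) - 1) / 4"

definition adj_in :: "'a set \<Rightarrow> ('a \<Rightarrow> 'a \<Rightarrow> nat) \<Rightarrow> 'a \<Rightarrow> 'a \<Rightarrow> bool" where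
  "adj_in S m u w \<longleftrightarrow> u \<in> S \<and> w \<in> S \<and> 0 < m u w"

definition connected_set :: "'a set \<Rightarrow> ('a \<Rightarrow> 'a \<Rightarrow> nat) \<Rightarrow> bool" where
  "connected_set S m \<longleftrightarrow> (\<forall>u\<in>S. \<forall>w\<in>S. (adj_in S m)\<^sup>*\<^sup>* u w)"

definition is_component :: "'a set \<Rightarrow> ('a \<Rightarrow> 'a \<Rightarrow> nat) \<Rightarrow> 'a set \<Rightarrow> bool" where
  "is_component S m C \<longleftrightarrow> C \<noteq> {} \<and> C \<subseteq> S \<and> connected_set C m
      \<and> (\<forall>u\<in>C. \<forall>w\<in>S - C. m u w = 0)"

text \<open>Cycles in the subgraph induced by S: two parallel edges, or a closed sequence of
  at least three distinct vertices, consecutive ones adjacent.\<close>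
definition cycle_list :: "'a set \<Rightarrow> ('a \<Rightarrow> 'a \<Rightarrow> nat) \<Rightarrow> 'a list \<Rightarrow> bool" where
  "cycle_list S m xs \<longleftrightarrow>
     (length xs = 2 \<and> distinct xs \<and> set xs \<subseteq> S \<and> 2 \<le> m (xs ! 0) (xs ! 1)) \<or>
     (3 \<le> length xs \<and> distinct xs \<and> set xs \<subseteq> S \<and>
        (\<forall>i < length xs. 0 < m (xs ! i) (xs ! ((i + 1) mod length xs))))"

definition has_cycle :: "'a set \<Rightarrow> ('a \<Rightarrow> 'a \<Rightarrow> nat) \<Rightarrow> bool" where
  "has_cycle S m \<longleftrightarrow> (\<exists>xs. cycle_list S m xs)"

definition cycle_through :: "'a set \<Rightarrow> ('a \<Rightarrow> 'a \<Rightarrow> nat) \<Rightarrow> 'a \<Rightarrow> bool" where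
  "cycle_through S m v \<longleftrightarrow> (\<exists>xs. cycle_list S m xs \<and> v \<in> set xs)"

definition induces_clique :: "'a set \<Rightarrow> ('a \<Rightarrow> 'a \<Rightarrow> nat) \<Rightarrow> bool" where
  "induces_clique C m \<longleftrightarrow> (\<forall>u\<in>C. \<forall>w\<in>C. u \<noteq> w \<longrightarrow> m u w = 1)"

definition induces_tree :: "'a set \<Rightarrow> ('a \<Rightarrow> 'a \<Rightarrow> nat) \<Rightarrow> bool" where
  "induces_tree C m \<longleftrightarrow> connected_set C m \<and> \<not> has_cycle C m"

definition feasible :: "'a set \<Rightarrow> ('a \<Rightarrow> 'a \<Rightarrow> nat) \<Rightarrow> nat \<Rightarrow> 'a set \<Rightarrow> bool" where
  "feasible V m k X \<longleftrightarrow> X \<subseteq> V \<and> card X \<le> k \<and>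
     (\<forall>C. is_component (V - X) m C \<longrightarrow> induces_clique C m \<or> induces_tree C m)"

definition yes_instance :: "'a set \<Rightarrow> ('a \<Rightarrow> 'a \<Rightarrow> nat) \<Rightarrow> nat \<Rightarrow> bool" where
  "yes_instance V m k \<longleftrightarrow> (\<exists>X. feasible V m k X)"

end

theory Submission
  imports Defs
begin


lemma cycle_mono: "cycle_list S m xs \<Longrightarrow> set xs \<subseteq> T \<Longrightarrow> cycle_list T m xs"
  unfolding cycle_list_def by blast

lemma cycle_cong:
  assumes "\<forall>u\<in>S. \<forall>w\<in>S. m u w = m' u w"
  shows "cycle_list S m xs = cycle_list S m' xs"
proof -
  have A: "set xs \<subseteq> S \<Longrightarrow> i < length xs \<Longrightarrow> j < length xs \<Longrightarrow> m (xs!i) (xs!j) = m' (xs!i) (xs!j)" for i j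
    using assms nth_mem by blast
  have B: "0 < length xs \<Longrightarrow> Suc i mod length xs < length xs" for i by simp
  have C: "set xs \<subseteq> S \<Longrightarrow> length xs \<ge> 3 \<Longrightarrow>
     (\<forall>i < length xs. 0 < m (xs ! i) (xs ! ((i + 1) mod length xs))) =
     (\<forall>i < length xs. 0 < m' (xs ! i) (xs ! ((i + 1) mod length xs)))"
  proof -
    assume "set xs \<subseteq> S" "length xs \<ge> 3"
    then have "\<forall>i < length xs. m (xs ! i) (xs ! ((i + 1) mod length xs)) = m' (xs ! i) (xs ! ((i + 1) mod length xs))"
    proof (intro allI impI)
      fix i assume "i < length xs"
      moreover have "(i+1) mod length xs < length xs" using \<open>length xs \<ge> 3\<close> by (intro mod_less_divisor) linarith
      ultimately show "m (xs ! i) (xs ! ((i + 1) mod length xs)) = m' (xs ! i) (xs ! ((i + 1) mod length xs))"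
        using A \<open>set xs \<subseteq> S\<close> by blast
    qed
    then show ?thesis by simp
  qed
  have D: "set xs \<subseteq> S \<Longrightarrow> length xs = 2 \<Longrightarrow> m (xs!0) (xs!1) = m' (xs!0) (xs!1)"
    using A by simp
  show ?thesis unfolding cycle_list_def using C D by metis
qed

lemma has_cycle_cong:
  "\<forall>u\<in>S. \<forall>w\<in>S. m u w = m' u w \<Longrightarrow> has_cycle S m = has_cycle S m'"
  unfolding has_cycle_def using cycle_cong by blast

lemma adj_cong:
  "\<forall>u\<in>S. \<forall>w\<in>S. m u w = m' u w \<Longrightarrow> adj_in S m = adj_in S m'"
  unfolding adj_in_def by (intro ext) auto

lemma connected_cong:
  "\<forall>u\<in>S. \<forall>w\<in>S. m u w = m' u w \<Longrightarrow> connected_set S m = connected_set S m'"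
  unfolding connected_set_def using adj_cong by metis

lemma clique_cong:
  "\<forall>u\<in>S. \<forall>w\<in>S. m u w = m' u w \<Longrightarrow> induces_clique S m = induces_clique S m'"
  unfolding induces_clique_def by auto

lemma tree_cong:
  "\<forall>u\<in>S. \<forall>w\<in>S. m u w = m' u w \<Longrightarrow> induces_tree S m = induces_tree S m'"
  unfolding induces_tree_def using connected_cong has_cycle_cong by metis

lemma restrict_agree: "S \<subseteq> T \<Longrightarrow> \<forall>u\<in>S. \<forall>w\<in>S. restrict_edges m T u w = m u w"
  unfolding restrict_edges_def by auto

lemma adj_sym:
  assumes "\<forall>u w. m u w = m w u" "(adj_in S m)\<^sup>*\<^sup>* a b"
  shows "(adj_in S m)\<^sup>*\<^sup>* b a"
  using assms(2)
proof (induction rule: rtranclp_induct)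
  case base then show ?case by simp
next
  case (step y z)
  have "adj_in S m z y" using step(2) assms(1) unfolding adj_in_def by auto
  then show ?case using step(3) by (rule converse_rtranclp_into_rtranclp)
qed

lemma comp_closed:
  "is_component S m K \<Longrightarrow> u \<in> K \<Longrightarrow> w \<in> S \<Longrightarrow> 0 < m u w \<Longrightarrow> w \<in> K"
  unfolding is_component_def by fastforce

lemma comp_contains:
  assumes K: "is_component S m K" and "T \<subseteq> S" and T: "connected_set T m"
    and t0: "t0 \<in> T" "t0 \<in> K"
  shows "T \<subseteq> K"
proof
  fix t assume "t \<in> T"
  then have "(adj_in T m)\<^sup>*\<^sup>* t0 t" using T t0 unfolding connected_set_def by blast
  then show "t \<in> K"
  proof (induction rule: rtranclp_induct)
    case base then show ?case using t0 by simp
  next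
    case (step y z) then show ?case using comp_closed[OF K] \<open>T \<subseteq> S\<close>
      unfolding adj_in_def by blast
  qed
qed

lemma comp_exists:
  assumes "u0 \<in> S" and sym: "\<forall>u w. m u w = m w u"
  shows "\<exists>K. is_component S m K \<and> u0 \<in> K"
proof -
  define K where "K = {w. (adj_in S m)\<^sup>*\<^sup>* u0 w}"
  have KS: "K \<subseteq> S"
  proof
    fix w assume "w \<in> K"
    then have "(adj_in S m)\<^sup>*\<^sup>* u0 w" by (simp add: K_def)
    then show "w \<in> S" using assms(1) by (induction rule: rtranclp_induct) (auto simp: adj_in_def)
  qed
  have toK: "(adj_in S m)\<^sup>*\<^sup>* u0 w \<Longrightarrow> (adj_in K m)\<^sup>*\<^sup>* u0 w" for w
  proof (induction rule: rtranclp_induct)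
    case base then show ?case by simp
  next
    case (step y z)
    have "y \<in> K" "z \<in> K" using step(1,2) by (auto simp: K_def)
    then have "adj_in K m y z" using step(2) by (auto simp: adj_in_def)
    then show ?case using step(3) by simp
  qed
  have "connected_set K m" unfolding connected_set_def
  proof (intro ballI)
    fix a b assume "a \<in> K" "b \<in> K"
    then have "(adj_in K m)\<^sup>*\<^sup>* u0 a" "(adj_in K m)\<^sup>*\<^sup>* u0 b" using toK by (auto simp: K_def)
    then show "(adj_in K m)\<^sup>*\<^sup>* a b" using adj_sym[OF sym] by (meson rtranclp_trans)
  qed
  moreover have "\<forall>u\<in>K. \<forall>w\<in>S - K. m u w = 0"
  proof (intro ballI)
    fix u w assume "u \<in> K" "w \<in> S - K"
    show "m u w = 0"
    proof (rule ccontr)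
      assume "m u w \<noteq> 0"
      then have "adj_in S m u w" using \<open>u \<in> K\<close> \<open>w \<in> S - K\<close> KS by (auto simp: adj_in_def)
      then have "w \<in> K" using \<open>u \<in> K\<close> by (auto simp: K_def)
      then show False using \<open>w \<in> S - K\<close> by simp
    qed
  qed
  moreover have "u0 \<in> K" by (simp add: K_def)
  ultimately show ?thesis using KS unfolding is_component_def by blast
qed

lemma path_exists:
  assumes "(adj_in S m)\<^sup>*\<^sup>* a b"
  shows "\<exists>xs. xs \<noteq> [] \<and> hd xs = a \<and> last xs = b \<and> distinct xs \<and> set xs \<subseteq> insert a S
     \<and> successively (\<lambda>x y. 0 < m x y) xs"
  using assms
proof (induction rule: rtranclp_induct)
  case base then show ?case by (intro exI[of _ "[a]"]) auto
next
  case (step y z)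
  then obtain xs where xs: "xs \<noteq> []" "hd xs = a" "last xs = y" "distinct xs" "set xs \<subseteq> insert a S"
     "successively (\<lambda>x y. 0 < m x y) xs" by blast
  show ?case
  proof (cases "z \<in> set xs")
    case True
    then obtain ys zs where yz: "xs = ys @ z # zs" by (meson split_list)
    show ?thesis
      apply (rule exI[of _ "ys @ [z]"])
      using xs yz by (auto simp: successively_append_iff hd_append split: if_splits)
  next
    case False
    show ?thesis
      apply (rule exI[of _ "xs @ [z]"])
      using xs False step(2) by (auto simp: successively_append_iff adj_in_def hd_append)
  qed
qed



lemma walk:
  fixes m :: "'a \<Rightarrow> 'a \<Rightarrow> nat"
  assumes L: "L = length xs" "0 < L"
    and adj: "\<forall>i<L. 0 < m (xs!i) (xs!((i+1) mod L))"
    and S: "set xs \<subseteq> S1 \<union> S2" and v: "v \<in> S1"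
    and sep: "\<forall>a\<in>S1-{v}. \<forall>b\<in>S2-{v}. m a b = 0"
    and start: "xs!(q mod L) \<in> S1"
  shows "(\<forall>t<n. xs!((q+t) mod L) \<noteq> v) \<Longrightarrow> xs!((q+n) mod L) \<in> S1"
proof (induction n)
  case 0 then show ?case using start by simp
next
  case (Suc n)
  have x: "xs!((q+n) mod L) \<in> S1" "xs!((q+n) mod L) \<noteq> v" using Suc by auto
  have i: "(q+n) mod L < L" using L by simp
  have e: "((q+n) mod L + 1) mod L = (q + Suc n) mod L" by (simp add: mod_Suc_eq)
  have pos: "0 < m (xs!((q+n) mod L)) (xs!((q + Suc n) mod L))" using adj i e by metis
  have "(q + Suc n) mod L < L" using L by simp
  then have "xs!((q + Suc n) mod L) \<in> S1 \<union> S2" using S L nth_mem by blast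
  show ?case
  proof (rule ccontr)
    assume "xs!((q + Suc n) mod L) \<notin> S1"
    then have "xs!((q + Suc n) mod L) \<in> S2 - {v}" using \<open>xs!((q + Suc n) mod L) \<in> S1 \<union> S2\<close> v by blast
    then have "m (xs!((q+n) mod L)) (xs!((q + Suc n) mod L)) = 0" using sep x by blast
    then show False using pos by linarith
  qed
qed

lemma mod_arith1:
  fixes p j L :: nat
  assumes "p < L" "j < L"
  shows "(Suc p + (j + L - Suc p) mod L) mod L = j"
proof -
  have "(Suc p + (j + L - Suc p) mod L) mod L = (Suc p + (j + L - Suc p)) mod L"
    by (rule mod_add_right_eq)
  also have "Suc p + (j + L - Suc p) = j + L" using assms by simp
  also have "(j + L) mod L = j" using assms by simp
  finally show ?thesis .
qed

lemma mod_arith2: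
  fixes p t L :: nat
  assumes "p < L" "t < L - 1"
  shows "(Suc p + t) mod L \<noteq> p"
proof (cases "Suc p + t < L")
  case True then show ?thesis by simp
next
  case False
  then have "(Suc p + t) mod L = (Suc p + t - L) mod L" by (simp add: le_mod_geq)
  also have "\<dots> = Suc p + t - L" using assms False by (intro mod_less) linarith
  finally show ?thesis using assms False by linarith
qed

lemma split_cycle:
  assumes cyc: "cycle_list S m xs" and SS: "S \<subseteq> S1 \<union> S2" and v: "v \<in> S1" "v \<in> S2"
    and sep: "\<forall>a\<in>S1-{v}. \<forall>b\<in>S2-{v}. m a b = 0" and sym: "\<forall>u w. m u w = m w u"
  shows "set xs \<subseteq> S1 \<or> set xs \<subseteq> S2"
proof -
  have sep2: "\<forall>a\<in>S2-{v}. \<forall>b\<in>S1-{v}. m a b = 0" using sep sym by metis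
  from cyc consider
    (two) "length xs = 2" "distinct xs" "set xs \<subseteq> S" "2 \<le> m (xs ! 0) (xs ! 1)"
  | (long) "3 \<le> length xs" "distinct xs" "set xs \<subseteq> S"
       "\<forall>i < length xs. 0 < m (xs ! i) (xs ! ((i + 1) mod length xs))"
    unfolding cycle_list_def by blast
  then show ?thesis
  proof cases
    case two
    then obtain a b where ab: "xs = [a, b]"
      by (auto simp: numeral_2_eq_2 length_Suc_conv)
    have pos: "0 < m a b" using two ab by simp
    have ab2: "a \<in> S1 \<union> S2" "b \<in> S1 \<union> S2" using ab two SS by auto
    show ?thesis
    proof (cases "a = v \<or> b = v")
      case True then show ?thesis using ab ab2 v by auto
    next
      case False
      have "\<not> (a \<in> S1 - {v} \<and> b \<in> S2 - {v})"
      proof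
        assume "a \<in> S1 - {v} \<and> b \<in> S2 - {v}"
        then have "m a b = 0" using sep by blast
        then show False using pos by linarith
      qed
      moreover have "\<not> (a \<in> S2 - {v} \<and> b \<in> S1 - {v})"
      proof
        assume "a \<in> S2 - {v} \<and> b \<in> S1 - {v}"
        then have "m a b = 0" using sep2 by blast
        then show False using pos by linarith
      qed
      ultimately show ?thesis using ab ab2 False by auto
    qed
  next
    case long
    define L where "L = length xs"
    have L0: "0 < L" using long(1) L_def by linarith
    have adj: "\<forall>i<L. 0 < m (xs!i) (xs!((i+1) mod L))" using long L_def by simp
    have S: "set xs \<subseteq> S1 \<union> S2" using long SS by blast
    obtain q where q: "\<forall>j<L. \<exists>n. (q+n) mod L = j \<and> (\<forall>t<n. xs!((q+t) mod L) \<noteq> v)"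
    proof (cases "v \<in> set xs")
      case True
      then obtain p where p: "p < L" "xs!p = v" using L_def by (metis in_set_conv_nth)
      show ?thesis
      proof (rule that[of "Suc p"], intro allI impI)
        fix j assume "j < L"
        define n where "n = (j + L - Suc p) mod L"
        have "(Suc p + n) mod L = j" using mod_arith1[OF p(1) \<open>j < L\<close>] n_def by simp
        moreover have "\<forall>t<n. xs!((Suc p+t) mod L) \<noteq> v"
        proof (intro allI impI)
          fix t assume "t < n"
          have "n < L" using L0 n_def by simp
          then have "t < L - 1" using \<open>t < n\<close> by linarith
          then have ne: "(Suc p + t) mod L \<noteq> p" using mod_arith2 p by blast
          have "(Suc p + t) mod L < L" using L0 by simp
          then show "xs!((Suc p+t) mod L) \<noteq> v"
            using ne p L_def nth_eq_iff_index_eq[OF long(2)] by metis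
        qed
        ultimately show "\<exists>n. (Suc p + n) mod L = j \<and> (\<forall>t<n. xs!((Suc p+t) mod L) \<noteq> v)" by blast
      qed
    next
      case False
      show ?thesis
      proof (rule that[of 0], intro allI impI)
        fix j assume "j < L"
        have "\<forall>t<j. xs!((0+t) mod L) \<noteq> v"
        proof (intro allI impI)
          fix t assume "t < j"
          then have "t < L" using \<open>j < L\<close> by simp
          then show "xs!((0+t) mod L) \<noteq> v" using False L_def nth_mem by fastforce
        qed
        then show "\<exists>n. (0 + n) mod L = j \<and> (\<forall>t<n. xs!((0+t) mod L) \<noteq> v)"
          using \<open>j < L\<close> by (intro exI[of _ j]) simp
      qed
    qed
    have "q mod L < L" using L0 by simp
    then have "xs!(q mod L) \<in> S1 \<union> S2" using S L_def nth_mem by blast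
    then show ?thesis
    proof
      assume st: "xs!(q mod L) \<in> S1"
      have "\<forall>j<L. xs!j \<in> S1"
      proof (intro allI impI)
        fix j assume "j < L"
        then obtain n where n: "(q+n) mod L = j" "\<forall>t<n. xs!((q+t) mod L) \<noteq> v" using q by blast
        show "xs!j \<in> S1" using walk[OF L_def L0 adj S v(1) sep st n(2)] n(1) by simp
      qed
      then show ?thesis using L_def by (auto simp: in_set_conv_nth)
    next
      assume st: "xs!(q mod L) \<in> S2"
      have S': "set xs \<subseteq> S2 \<union> S1" using S by blast
      have "\<forall>j<L. xs!j \<in> S2"
      proof (intro allI impI)
        fix j assume "j < L"
        then obtain n where n: "(q+n) mod L = j" "\<forall>t<n. xs!((q+t) mod L) \<noteq> v" using q by blast
        show "xs!j \<in> S2" using walk[OF L_def L0 adj S' v(2) sep2 st n(2)] n(1) by simp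
      qed
      then show ?thesis using L_def by (auto simp: in_set_conv_nth)
    qed
  qed
qed

lemma nbr_cycle:
  assumes sym: "\<forall>u w. m u w = m w u" and conn: "connected_set C m"
    and c: "c1 \<in> C" "c2 \<in> C" "c1 \<noteq> c2" and vC: "v \<notin> C" and sub: "insert v C \<subseteq> T"
    and e: "0 < m v c1" "0 < m v c2"
  shows "cycle_through T m v"
proof -
  have "(adj_in C m)\<^sup>*\<^sup>* c1 c2" using conn c unfolding connected_set_def by blast
  then obtain xs where xs: "xs \<noteq> []" "hd xs = c1" "last xs = c2" "distinct xs" "set xs \<subseteq> insert c1 C"
     "successively (\<lambda>x y. 0 < m x y) xs" using path_exists by metis
  have len: "length xs \<ge> 2"
  proof (rule ccontr)
    assume "\<not> length xs \<ge> 2"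
    moreover have "length xs \<noteq> 0" using xs(1) by simp
    ultimately have "length xs = 1" by linarith
    then have "hd xs = last xs" by (auto simp: length_Suc_conv)
    then show False using xs c by simp
  qed
  define ys where "ys = v # xs"
  have "cycle_list T m ys" unfolding cycle_list_def
  proof (rule disjI2, intro conjI)
    show "3 \<le> length ys" using len ys_def by simp
    show "distinct ys" using xs vC c ys_def by auto
    show "set ys \<subseteq> T" using xs sub c ys_def by auto
    show "\<forall>i<length ys. 0 < m (ys ! i) (ys ! ((i + 1) mod length ys))"
    proof (intro allI impI)
      fix i assume i: "i < length ys"
      consider "i = 0" | "0 < i" "i + 1 < length ys" | "i + 1 = length ys" using i by linarith
      then show "0 < m (ys ! i) (ys ! ((i + 1) mod length ys))"
      proof cases
        case 1 then show ?thesis using ys_def len e xs by (simp add: hd_conv_nth)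
      next
        case 2
        then obtain j where j: "i = Suc j" by (cases i) auto
        have "Suc j < length xs" using 2 j ys_def by simp
        then have "0 < m (xs!j) (xs!Suc j)" using successively_nth[OF xs(6)] by blast
        then show ?thesis using 2 j ys_def by simp
      next
        case 3
        have "ys ! i = last xs" using 3 ys_def xs(1) by (simp add: last_conv_nth)
        moreover have "(i+1) mod length ys = 0" using 3 by simp
        ultimately show ?thesis using ys_def xs e sym by simp
      qed
    qed
  qed
  then show ?thesis unfolding cycle_through_def ys_def by auto
qed



lemma forward:
  assumes G: "mgraph V m" and F: "feasible V m k X"
  shows "feasible (V - C) (restrict_edges m (V - C)) k (X - C)"
proof -
  define m' where "m' = restrict_edges m (V - C)"
  have sym: "\<forall>u w. m u w = m w u" using G unfolding mgraph_def by blast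
  have XV: "X \<subseteq> V" "card X \<le> k" and FC: "\<forall>K. is_component (V - X) m K \<longrightarrow> induces_clique K m \<or> induces_tree K m"
    using F unfolding feasible_def by auto
  have finX: "finite X" using XV G unfolding mgraph_def by (meson finite_subset)
  have card: "card (X - C) \<le> k" using XV finX by (meson card_mono Diff_subset le_trans)
  have "induces_clique K' m' \<or> induces_tree K' m'" if K': "is_component ((V - C) - (X - C)) m' K'" for K'
  proof -
    have K'sub: "K' \<subseteq> V - X" "K' \<subseteq> V - C" using K' unfolding is_component_def by auto
    have agree: "\<forall>u\<in>K'. \<forall>w\<in>K'. m' u w = m u w" using restrict_agree[OF K'sub(2)] m'_def by simp
    obtain u0 where u0: "u0 \<in> K'" using K' unfolding is_component_def by blast
    obtain K where K: "is_component (V - X) m K" "u0 \<in> K" using comp_exists[OF _ sym] u0 K'sub by blast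
    have cK': "connected_set K' m" using K' connected_cong[OF agree] unfolding is_component_def by blast
    have sub: "K' \<subseteq> K" using comp_contains[OF K(1) K'sub(1) cK' u0 K(2)] .
    have "induces_clique K m \<or> induces_tree K m" using FC K by blast
    then have "induces_clique K' m \<or> induces_tree K' m"
    proof
      assume "induces_clique K m" then show ?thesis using sub unfolding induces_clique_def by blast
    next
      assume "induces_tree K m"
      then have "\<not> has_cycle K' m" using sub cycle_mono unfolding induces_tree_def has_cycle_def cycle_list_def
        by (meson order_trans)
      then show ?thesis using cK' unfolding induces_tree_def by blast
    qed
    then show ?thesis using clique_cong[OF agree] tree_cong[OF agree] by blast
  qed
  then show ?thesis unfolding feasible_def m'_def[symmetric] using XV card by auto
qed



lemma backward:
  fixes V :: "'a set" and m :: "'a \<Rightarrow> 'a \<Rightarrow> nat" and k :: nat and v :: 'a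
    and B C :: "'a set"
  assumes G: "mgraph V m"
    and ls: "large_sparse V m k v"
    and Bv: "B \<subseteq> V - {v}" and cB: "card B \<le> 2 * k"
    and nocyc: "\<not> cycle_through (V - B) m v"
    and Ccomp: "is_component (V - ({v} \<union> B)) m C"
    and Cn: "C \<inter> nbrs V m v \<noteq> {}"
    and Ctree: "induces_tree C m"
    and CB: "\<forall>c\<in>C. \<forall>b\<in>B. m c b = 0"
    and F: "feasible (V - C) (restrict_edges m (V - C)) k X"
  shows "feasible V m k X"
proof -
  define m' where "m' = restrict_edges m (V - C)"
  have sym: "\<forall>u w. m u w = m w u" and loop: "\<forall>u. m u u = 0" and finV: "finite V"
    and inV: "\<forall>u w. 0 < m u w \<longrightarrow> u \<in> V \<and> w \<in> V"
    using G unfolding mgraph_def by auto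
  have XV: "X \<subseteq> V - C" "card X \<le> k" and FC: "\<forall>K. is_component ((V - C) - X) m' K \<longrightarrow> induces_clique K m' \<or> induces_tree K m'"
    using F unfolding feasible_def m'_def by auto
  have finX: "finite X" using finite_subset[OF _ finV] XV(1) by blast
  have finB: "finite B" using finite_subset[OF _ finV] Bv by blast
  have CV: "C \<subseteq> V - ({v} \<union> B)" using Ccomp unfolding is_component_def by blast
  have vV: "v \<in> V" using ls unfolding large_sparse_def by blast
  have vB: "v \<notin> B" using Bv by blast
  have Cconn: "connected_set C m" using Ctree unfolding induces_tree_def by blast
  have Cnocyc: "\<not> has_cycle C m" using Ctree unfolding induces_tree_def by blast
  have Cedge: "w \<in> C \<or> w = v" if "c \<in> C" "0 < m c w" for c w
  proof (rule ccontr)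
    assume nw: "\<not> (w \<in> C \<or> w = v)"
    have "w \<in> V" using inV that by blast
    show False
    proof (cases "w \<in> B")
      case True then show ?thesis using CB that by fastforce
    next
      case False
      then have "w \<in> V - ({v} \<union> B) - C" using nw \<open>w \<in> V\<close> by blast
      then have "m c w = 0" using Ccomp that(1) unfolding is_component_def by blast
      then show ?thesis using that by linarith
    qed
  qed
  obtain c0 where c0: "c0 \<in> C" "0 < m v c0" using Cn unfolding nbrs_def by blast
  have NC1: "card (nbrs V m v \<inter> C) \<le> 1"
  proof -
    have "x = y" if "x \<in> nbrs V m v \<inter> C" "y \<in> nbrs V m v \<inter> C" for x y
    proof (rule ccontr)
      assume xy: "x \<noteq> y"
      have x: "x \<in> C" "0 < m v x" and y: "y \<in> C" "0 < m v y" using that unfolding nbrs_def by auto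
      have vC: "v \<notin> C" using CV by blast
      have sub: "insert v C \<subseteq> V - B" using CV vV vB by blast
      have "cycle_through (V - B) m v" by (rule nbr_cycle[OF sym Cconn x(1) y(1) xy vC sub x(2) y(2)])
      then show False using nocyc by blast
    qed
    moreover have "finite (nbrs V m v \<inter> C)" using finite_subset[OF _ finV] CV by blast
    ultimately show ?thesis using card_le_Suc0_iff_eq by (metis One_nat_def)
  qed
  have XC: "X \<inter> C = {}" using XV by blast
  have "induces_clique K m \<or> induces_tree K m" if K: "is_component (V - X) m K" for K
  proof (cases "K \<inter> C = {}")
    case True
    have Ksub: "K \<subseteq> V - C" "K \<subseteq> V - X" using K True unfolding is_component_def by auto
    have agree: "\<forall>u\<in>K. \<forall>w\<in>K. m' u w = m u w" using restrict_agree[OF Ksub(1)] m'_def by simp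
    have "is_component ((V - C) - X) m' K" unfolding is_component_def
    proof (intro conjI)
      show "K \<noteq> {}" using K unfolding is_component_def by blast
      show "K \<subseteq> V - C - X" using Ksub by blast
      show "connected_set K m'" using K connected_cong[OF agree] unfolding is_component_def by blast
      show "\<forall>u\<in>K. \<forall>w\<in>V - C - X - K. m' u w = 0"
        using K unfolding is_component_def m'_def restrict_edges_def by auto
    qed
    then have "induces_clique K m' \<or> induces_tree K m'" using FC by blast
    then show ?thesis using clique_cong[OF agree] tree_cong[OF agree] by blast
  next
    case False
    then obtain c where c: "c \<in> C" "c \<in> K" by blast
    have CK: "C \<subseteq> K" using comp_contains[OF K _ Cconn c] CV XC by blast
    have Kconn: "connected_set K m" using K unfolding is_component_def by blast
    have KVX: "K \<subseteq> V - X" using K unfolding is_component_def by blast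
    show ?thesis
    proof (cases "v \<in> X")
      case True
      have "K \<subseteq> C"
      proof
        fix u assume "u \<in> K"
        then have "(adj_in K m)\<^sup>*\<^sup>* c u" using Kconn c unfolding connected_set_def by blast
        then show "u \<in> C"
        proof (induction rule: rtranclp_induct)
          case base then show ?case using c by simp
        next
          case (step y z)
          then have "z \<in> C \<or> z = v" using Cedge unfolding adj_in_def by blast
          moreover have "z \<noteq> v" using step(2) KVX True unfolding adj_in_def by blast
          ultimately show ?case by blast
        qed
      qed
      then have "\<not> has_cycle K m" using Cnocyc cycle_mono unfolding has_cycle_def cycle_list_def
        by (meson order_trans)
      then show ?thesis using Kconn unfolding induces_tree_def by blast
    next
      case vX: False
      have vK: "v \<in> K" using comp_closed[OF K, of c0 v] c0 CK vV vX sym by auto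
      define D where "D = K - C"
      have vD: "v \<in> D" using vK CV D_def by blast
      have Dsub: "D \<subseteq> V - C" using D_def KVX by blast
      have agree: "\<forall>u\<in>D. \<forall>w\<in>D. m' u w = m u w" using restrict_agree[OF Dsub] m'_def by simp
      have reach: "u \<in> C \<or> (adj_in D m)\<^sup>*\<^sup>* v u" if "(adj_in K m)\<^sup>*\<^sup>* v u" for u
        using that
      proof (induction rule: rtranclp_induct)
        case base then show ?case by simp
      next
        case (step y z)
        show ?case
        proof (cases "z \<in> C")
          case True then show ?thesis by simp
        next
          case zC: False
          show ?thesis
          proof (cases "y \<in> C")
            case True
            then have "z = v" using Cedge step(2) zC unfolding adj_in_def by blast
            then show ?thesis by simp
          next
            case False
            then have "(adj_in D m)\<^sup>*\<^sup>* v y" using step(3) by blast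
            moreover have "adj_in D m y z" using step(2) False zC unfolding adj_in_def D_def by blast
            ultimately have "(adj_in D m)\<^sup>*\<^sup>* v z" by (rule rtranclp.rtrancl_into_rtrancl)
            then show ?thesis by blast
          qed
        qed
      qed
      have Dconn: "connected_set D m" unfolding connected_set_def
      proof (intro ballI)
        fix a b assume "a \<in> D" "b \<in> D"
        then have "(adj_in K m)\<^sup>*\<^sup>* v a" "(adj_in K m)\<^sup>*\<^sup>* v b" using Kconn vK unfolding connected_set_def D_def by auto
        then have "(adj_in D m)\<^sup>*\<^sup>* v a" "(adj_in D m)\<^sup>*\<^sup>* v b" using reach \<open>a \<in> D\<close> \<open>b \<in> D\<close> D_def by auto
        then show "(adj_in D m)\<^sup>*\<^sup>* a b" using adj_sym[OF sym] by (meson rtranclp_trans)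
      qed
      have "is_component ((V - C) - X) m' D" unfolding is_component_def
      proof (intro conjI)
        show "D \<noteq> {}" using vD by blast
        show "D \<subseteq> V - C - X" using Dsub KVX D_def by blast
        show "connected_set D m'" using Dconn connected_cong[OF agree] by blast
        show "\<forall>u\<in>D. \<forall>w\<in>V - C - X - D. m' u w = 0"
          using K unfolding is_component_def m'_def restrict_edges_def D_def by auto
      qed
      then have "induces_clique D m' \<or> induces_tree D m'" using FC by blast
      then have Dct: "induces_clique D m \<or> induces_tree D m" using clique_cong[OF agree] tree_cong[OF agree] by blast
      have finD: "finite D" using finite_subset[OF _ finV] Dsub by blast
      have Dnocyc: "\<not> has_cycle D m"
      proof (cases "induces_tree D m")
        case True then show ?thesis unfolding induces_tree_def by blast
      next
        case False
        then have cl: "induces_clique D m" using Dct by blast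
        have "card D \<le> 2"
        proof (rule ccontr)
          assume "\<not> card D \<le> 2"
          then have c3: "card D \<ge> 3" by simp
          have "2 \<le> card (D - {v} - B)"
          proof (cases "k = 0")
            case True
            then have "B = {}" using cB finB by simp
            then show ?thesis using c3 vD finD by simp
          next
            case False
            define N where "N = nbrs V m v"
            have finN: "finite N" using finV unfolding N_def nbrs_def by simp
            have "N - X - C - B \<subseteq> D - {v} - B"
            proof
              fix u assume u: "u \<in> N - X - C - B"
              then have "u \<in> V" "0 < m v u" "u \<notin> X" "u \<notin> C" unfolding N_def nbrs_def by auto
              then have "u \<in> K" using comp_closed[OF K vK] by blast
              moreover have "u \<noteq> v" using \<open>0 < m v u\<close> loop by auto
              ultimately show "u \<in> D - {v} - B" using u D_def by blast
            qed
            then have "card (N - X - C - B) \<le> card (D - {v} - B)" using finD by (meson card_mono finite_Diff)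
            moreover have "card N - card X - 1 - card B \<le> card (N - X - C - B)"
            proof -
              have "card N - card X \<le> card (N - X)" using finX by (rule diff_card_le_card_Diff)
              moreover have "card (N - X) - 1 \<le> card (N - X - C)"
              proof -
                have "N - X - C = (N - X) - (N \<inter> C)" by blast
                moreover have "card (N - X) - card (N \<inter> C) \<le> card ((N - X) - (N \<inter> C))"
                  using finN by (intro diff_card_le_card_Diff) simp
                ultimately show ?thesis using NC1 N_def by simp
              qed
              moreover have "card (N - X - C) - card B \<le> card (N - X - C - B)"
                using finB by (rule diff_card_le_card_Diff)
              ultimately show ?thesis by linarith
            qed
            moreover have "card N > 7 * k" using ls unfolding large_sparse_def N_def by blast
            ultimately show ?thesis using XV cB False by linarith
          qed
          then obtain u1 u2 where u: "u1 \<in> D - {v} - B" "u2 \<in> D - {v} - B" "u1 \<noteq> u2"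
            by (metis One_nat_def card_le_Suc0_iff_eq finite_Diff finD not_less_eq_eq numeral_2_eq_2)
          have e: "m v u1 = 1" "m u1 u2 = 1" "m u2 v = 1" using cl u vD unfolding induces_clique_def by auto
          have "cycle_list (V - B) m [v, u1, u2]" unfolding cycle_list_def
          proof (rule disjI2, intro conjI)
            show "3 \<le> length [v, u1, u2]" by simp
            show "distinct [v, u1, u2]" using u by auto
            show "set [v, u1, u2] \<subseteq> V - B" using u vD Dsub vV vB by auto
            show "\<forall>i<length [v, u1, u2]. 0 < m ([v, u1, u2] ! i) ([v, u1, u2] ! ((i + 1) mod length [v, u1, u2]))"
            proof (intro allI impI)
              fix i assume "i < length [v, u1, u2]"
              then have "i = 0 \<or> i = 1 \<or> i = 2" by auto
              then show "0 < m ([v, u1, u2] ! i) ([v, u1, u2] ! ((i + 1) mod length [v, u1, u2]))"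
                using e by auto
            qed
          qed
          then have "cycle_through (V - B) m v" unfolding cycle_through_def by force
          then show False using nocyc by blast
        qed
        show ?thesis
        proof
          assume "has_cycle D m"
          then obtain xs where xs: "cycle_list D m xs" unfolding has_cycle_def by blast
          then consider
            (two) "length xs = 2" "distinct xs" "set xs \<subseteq> D" "2 \<le> m (xs ! 0) (xs ! 1)"
          | (long) "3 \<le> length xs" "distinct xs" "set xs \<subseteq> D"
            unfolding cycle_list_def by blast
          then show False
          proof cases
            case two
            have "xs!0 \<in> D" "xs!1 \<in> D" "xs!0 \<noteq> xs!1" using two by (auto simp: nth_eq_iff_index_eq)
            then have "m (xs!0) (xs!1) = 1" using cl unfolding induces_clique_def by blast
            then show False using two by simp
          next
            case long
            have "card (set xs) \<le> card D" using long finD by (simp add: card_mono)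
            then show False using long \<open>card D \<le> 2\<close> distinct_card by fastforce
          qed
        qed
      qed
      have KDC: "K = D \<union> C" using CK D_def by blast
      have "\<not> has_cycle K m"
      proof
        assume "has_cycle K m"
        then obtain xs where xs: "cycle_list K m xs" unfolding has_cycle_def by blast
        have sep: "\<forall>a\<in>D-{v}. \<forall>b\<in>(insert v C)-{v}. m a b = 0"
        proof (intro ballI)
          fix a b assume "a \<in> D-{v}" "b \<in> insert v C - {v}"
          then have "\<not> 0 < m b a" using Cedge[of b a] D_def by blast
          then show "m a b = 0" using sym by simp
        qed
        have "set xs \<subseteq> D \<or> set xs \<subseteq> insert v C"
          using split_cycle[OF xs _ vD _ sep sym] KDC by blast
        then show False
        proof
          assume "set xs \<subseteq> D"
          then show False using cycle_mono[OF xs] Dnocyc unfolding has_cycle_def by blast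
        next
          assume sx: "set xs \<subseteq> insert v C"
          show False
          proof (cases "v \<in> set xs")
            case True
            have "insert v C \<subseteq> V - B" using CV vV vB by blast
            then have "cycle_list (V - B) m xs" using cycle_mono[OF xs] sx by blast
            then show False using nocyc True unfolding cycle_through_def by blast
          next
            case False
            then have "set xs \<subseteq> C" using sx by blast
            then show False using cycle_mono[OF xs] Cnocyc unfolding has_cycle_def by blast
          qed
        qed
      qed
      then show ?thesis using Kconn unfolding induces_tree_def by blast
    qed
  qed
  then show ?thesis unfolding feasible_def using XV by blast
qed


theorem mainTheorem8:
  fixes V :: "'a set" and m :: "'a \<Rightarrow> 'a \<Rightarrow> nat" and k :: nat and v :: 'a
    and B C :: "'a set"
  assumes "mgraph V m"
    and "large_sparse V m k v"
    and "B \<subseteq> V - {v}" and "card B \<le> 2 * k"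
    and "\<not> cycle_through (V - B) m v"
    and "is_component (V - ({v} \<union> B)) m C"
    and "C \<inter> nbrs V m v \<noteq> {}"
    and "induces_tree C m"
    and "\<forall>c\<in>C. \<forall>b\<in>B. m c b = 0"
  shows "yes_instance V m k \<longleftrightarrow> yes_instance (V - C) (restrict_edges m (V - C)) k"
proof
  assume "yes_instance V m k"
  then obtain X where "feasible V m k X" unfolding yes_instance_def by blast
  then have "feasible (V - C) (restrict_edges m (V - C)) k (X - C)" using forward[OF assms(1)] by blast
  then show "yes_instance (V - C) (restrict_edges m (V - C)) k" unfolding yes_instance_def by blast
next
  assume "yes_instance (V - C) (restrict_edges m (V - C)) k"
  then obtain X where "feasible (V - C) (restrict_edges m (V - C)) k X" unfolding yes_instance_def by blast
  then have "feasible V m k X" using backward[OF assms] by blast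
  then show "yes_instance V m k" unfolding yes_instance_def by blast
qed

end
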